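(* Let $G=(V,E,w)$ be a star graph with nonnegative edge weights. Then \[ \|H_G\|\leq \max_{e\in E} w_e+\sum_{e\in E} w_e. \]
   Context: A star graph is a complete bipartite graph $K_{1,m}$: one center vertex adjacent to all other vertices, with no other edges. Qubits are placed on the vertices; with Pauli operators $X_i,Y_i,Z_i$ on qubit $i$, define $h_{ij}=\frac12(I-X_iX_j-Y_iY_j-Z_iZ_j)$ and $H_G=\sum_{\{i,j\}\in E} w_{ij}h_{ij}$; $\|\cdot\|$ denotes the operator norm. *)

theory Defs
  imports "HOL-Analysis.Analysis"
begin

text \<open>Single-qubit Pauli matrices, indexed by computational basis states
  (False = |0>, True = |1>); entry P a b is row a, column b.\<close>

definition pauliX :: "bool \<Rightarrow> bool \<Rightarrow> complex" where
  "pauliX a b = (if a \<noteq> b then 1 else 0)"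

definition pauliY :: "bool \<Rightarrow> bool \<Rightarrow> complex" where
  "pauliY a b = (if a = b then 0 else if a then \<i> else - \<i>)"

definition pauliZ :: "bool \<Rightarrow> bool \<Rightarrow> complex" where
  "pauliZ a b = (if a \<noteq> b then 0 else if a then -1 else 1)"

text \<open>Qubits sit on the vertices (type 'v); the Hilbert space is
  complex ^ ('v \<Rightarrow> bool), basis states are assignments of a bit to every vertex.\<close>

definition pauli_pair ::
  "(bool \<Rightarrow> bool \<Rightarrow> complex) \<Rightarrow> 'v::finite \<Rightarrow> 'v \<Rightarrow> complex ^ ('v \<Rightarrow> bool) ^ ('v \<Rightarrow> bool)" where
  "pauli_pair P i j = (\<chi> x y. P (x i) (y i) * P (x j) (y j) *
       (if \<forall>k. k \<noteq> i \<and> k \<noteq> j \<longrightarrow> x k = y k then 1 else 0))"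

definition hterm :: "'v::finite \<Rightarrow> 'v \<Rightarrow> complex ^ ('v \<Rightarrow> bool) ^ ('v \<Rightarrow> bool)" where
  "hterm i j = (1/2 :: real) *\<^sub>R
     (mat 1 - pauli_pair pauliX i j - pauli_pair pauliY i j - pauli_pair pauliZ i j)"

text \<open>The star graph K_{1,m}: vertex set 'n option, center None, leaves Some j
  (m = CARD('n)); the edge {None, Some j} has weight w j.\<close>

definition H_star :: "('n::finite \<Rightarrow> real) \<Rightarrow> complex ^ ('n option \<Rightarrow> bool) ^ ('n option \<Rightarrow> bool)" where
  "H_star w = (\<Sum>j\<in>UNIV. w j *\<^sub>R hterm None (Some j))"

definition op_norm :: "complex ^ 's::finite ^ 's \<Rightarrow> real" where
  "op_norm A = onorm (\<lambda>v. A *v v)"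

end

theory Submission
  imports Defs
begin


definition sw :: "'n \<Rightarrow> ('n option \<Rightarrow> bool) \<Rightarrow> ('n option \<Rightarrow> bool)" where
  "sw j x = x(None := x (Some j), Some j := x None)"

lemma sw_sw[simp]: "sw j (sw j x) = x"
  by (auto simp: sw_def fun_eq_iff)

lemma hterm_entry:
  fixes j :: "'n::finite"
  shows "hterm None (Some j) $ x $ y =
    (if y = x then 1 else 0) - (if y = sw j x then 1 else 0)"
proof -
  let ?C = "\<forall>k. k \<noteq> None \<and> k \<noteq> Some j \<longrightarrow> x k = y k"
  have e1: "(x = y) \<longleftrightarrow> ?C \<and> x None = y None \<and> x (Some j) = y (Some j)"
  proof
    assume R: "?C \<and> x None = y None \<and> x (Some j) = y (Some j)"
    show "x = y"
    proof
      fix k show "x k = y k" using R by (cases "k = None \<or> k = Some j") auto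
    qed
  qed auto
  have e2: "(y = sw j x) \<longleftrightarrow> ?C \<and> y None = x (Some j) \<and> y (Some j) = x None"
  proof
    assume R: "?C \<and> y None = x (Some j) \<and> y (Some j) = x None"
    show "y = sw j x"
    proof
      fix k show "y k = sw j x k" using R by (cases "k = None \<or> k = Some j") (auto simp: sw_def)
    qed
  qed (auto simp: sw_def)
  have h0: "hterm None (Some j) $ x $ y = complex_of_real (1/2) * ((if x = y then 1 else 0)
     - pauliX (x None) (y None) * pauliX (x (Some j)) (y (Some j)) * (if ?C then 1 else 0)
     - pauliY (x None) (y None) * pauliY (x (Some j)) (y (Some j)) * (if ?C then 1 else 0)
     - pauliZ (x None) (y None) * pauliZ (x (Some j)) (y (Some j)) * (if ?C then 1 else 0))"
    unfolding hterm_def vector_scaleR_component vector_minus_component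
    by (simp add: pauli_pair_def mat_def scaleR_conv_of_real)
  show ?thesis
    unfolding h0 eq_commute[of y x] e1 e2
    by (cases "x None"; cases "y None"; cases "x (Some j)"; cases "y (Some j)"; cases ?C)
       (simp_all add: pauliX_def pauliY_def pauliZ_def)
qed


lemma Hv:
  fixes w :: "'n::finite \<Rightarrow> real"
  shows "(H_star w *v v) $ x = (\<Sum>j\<in>UNIV. of_real (w j) * (v$x - v$(sw j x)))"
proof -
  have "(H_star w *v v) $ x = (\<Sum>y\<in>UNIV. (\<Sum>j\<in>UNIV. of_real (w j) *
      ((if y = x then 1 else 0) - (if y = sw j x then 1 else 0))) * v$y)"
    unfolding matrix_vector_mult_def H_star_def vec_lambda_beta sum_component vector_scaleR_component
    by (simp add: hterm_entry scaleR_conv_of_real)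
  also have "\<dots> = (\<Sum>y\<in>UNIV. \<Sum>j\<in>UNIV. of_real (w j) *
      ((if y = x then 1 else 0) - (if y = sw j x then 1 else 0)) * v$y)"
    by (simp only: sum_distrib_right)
  also have "\<dots> = (\<Sum>j\<in>UNIV. \<Sum>y\<in>UNIV. of_real (w j) *
      ((if y = x then 1 else 0) - (if y = sw j x then 1 else 0)) * v$y)"
    by (rule sum.swap)
  also have "\<dots> = (\<Sum>j\<in>UNIV. of_real (w j) * (v$x - v$(sw j x)))"
  proof (rule sum.cong[OF refl])
    fix j
    have "(\<Sum>y\<in>UNIV. of_real (w j) *
      ((if y = x then 1 else 0) - (if y = sw j x then 1 else 0)) * v$y) =
      of_real (w j) * ((\<Sum>y\<in>UNIV. (if y = x then v$y else 0)) - (\<Sum>y\<in>UNIV. (if y = sw j x then v$y else 0)))"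
      by (simp only: sum_subtractf[symmetric] sum_distrib_left) (rule sum.cong[OF refl], simp)
    thus "(\<Sum>y\<in>UNIV. of_real (w j) *
      ((if y = x then 1 else 0) - (if y = sw j x then 1 else 0)) * v$y) = of_real (w j) * (v$x - v$(sw j x))"
      by simp
  qed
  finally show ?thesis .
qed

lemma normsq: "(norm (v :: complex ^ 'a::finite))^2 = (\<Sum>x\<in>UNIV. (cmod (v$x))^2)"
  by (simp add: norm_vec_def L2_set_def sum_nonneg)

lemma CS2:
  fixes a b :: "'a \<Rightarrow> 'b \<Rightarrow> real"
  shows "(\<Sum>i\<in>I. \<Sum>j\<in>J. a i j * b i j)^2 \<le> (\<Sum>i\<in>I. \<Sum>j\<in>J. (a i j)^2) * (\<Sum>i\<in>I. \<Sum>j\<in>J. (b i j)^2)"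
  unfolding sum.cartesian_product
  using Cauchy_Schwarz_ineq_sum[of "\<lambda>p. a (fst p) (snd p)" "\<lambda>p. b (fst p) (snd p)" "I \<times> J"]
  by (simp add: case_prod_beta')

lemma sum_sw:
  fixes g :: "('n option \<Rightarrow> bool) \<Rightarrow> 'c::comm_monoid_add"
  shows "(\<Sum>x\<in>UNIV. g (sw j x)) = (\<Sum>x\<in>UNIV. g x)"
  by (rule sum.reindex_bij_witness[of _ "sw j" "sw j"]) auto

lemma half:
  fixes u v :: "('n option \<Rightarrow> bool) \<Rightarrow> complex"
  shows "(\<Sum>x\<in>UNIV. cnj (u x) * (v x - v (sw j x))) =
     (1/2) * (\<Sum>x\<in>UNIV. cnj (u x - u (sw j x)) * (v x - v (sw j x)))"
proof -
  let ?S = "(\<Sum>x\<in>UNIV. cnj (u x) * (v x - v (sw j x)))"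
  have "(\<Sum>x\<in>UNIV. cnj (u (sw j x)) * (v (sw j x) - v (sw j (sw j x)))) = ?S"
    by (rule sum_sw)
  moreover have "(\<Sum>x\<in>UNIV. cnj (u (sw j x)) * (v x - v (sw j x))) =
     (\<Sum>x\<in>UNIV. - (cnj (u (sw j x)) * (v (sw j x) - v (sw j (sw j x)))))"
    by (simp add: algebra_simps)
  ultimately have 1: "(\<Sum>x\<in>UNIV. cnj (u (sw j x)) * (v x - v (sw j x))) = - ?S"
    by (simp only: sum_negf)
  have "(\<Sum>x\<in>UNIV. cnj (u x - u (sw j x)) * (v x - v (sw j x))) = ?S -
      (\<Sum>x\<in>UNIV. cnj (u (sw j x)) * (v x - v (sw j x)))"
    by (simp add: sum_subtractf[symmetric] algebra_simps)
  also have "\<dots> = 2 * ?S" using 1 by simp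
  finally show ?thesis by simp
qed



definition dg :: "('n::finite \<Rightarrow> real) \<Rightarrow> ('n option \<Rightarrow> bool) \<Rightarrow> real" where
  "dg w x = (\<Sum>k\<in>UNIV. w k * (if x None \<noteq> x (Some k) then 1 else 0))"

lemma sw_cond: "(sw j x None \<noteq> sw j x (Some j)) = (x None \<noteq> x (Some j))"
  by (auto simp: sw_def)

lemma sw_id: "x None = x (Some j) \<Longrightarrow> sw j x = x"
  by (auto simp: sw_def fun_eq_iff)

lemma dg_sum:
  fixes w :: "'n::finite \<Rightarrow> real"
  assumes "x None \<noteq> x (Some j)"
  shows "dg w x + dg w (sw j x) = sum w UNIV + w j"
proof -
  have "\<And>k. (if x None \<noteq> x (Some k) then 1 else 0) + (if sw j x None \<noteq> sw j x (Some k) then 1 else 0)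
        = 1 + (if k = j then 1 else (0::real))"
    using assms by (auto simp: sw_def)
  hence "dg w x + dg w (sw j x) = (\<Sum>k\<in>UNIV. w k * (1 + (if k = j then 1 else 0)))"
    unfolding dg_def sum.distrib[symmetric] distrib_left[symmetric] by simp
  also have "\<dots> = sum w UNIV + w j"
  proof -
    have "(\<Sum>k\<in>UNIV. w k * (1 + (if k = j then 1 else 0))) = (\<Sum>k\<in>UNIV. w k + (if k = j then w k else 0))"
      by (rule sum.cong) auto
    thus ?thesis by (simp add: sum.distrib)
  qed
  finally show ?thesis .
qed

lemma dg_ge:
  fixes w :: "'n::finite \<Rightarrow> real"
  assumes "\<And>k. w k \<ge> 0" "x None \<noteq> x (Some j)"
  shows "w j \<le> dg w x"
proof -
  have "w j * (if x None \<noteq> x (Some j) then 1 else 0) \<le> dg w x"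
    unfolding dg_def by (rule member_le_sum) (use assms in auto)
  thus ?thesis using assms by simp
qed

lemma key_ineq:
  fixes a b :: complex and p q :: real
  assumes "p > 0" "q > 0"
  shows "(cmod (a - b))^2 \<le> (p + q) * ((cmod a)^2 / p + (cmod b)^2 / q)"
proof -
  have "(cmod (a - b))^2 \<le> (cmod a + cmod b)^2"
    by (simp add: norm_triangle_ineq4 power_mono)
  also have "\<dots> \<le> (p + q) * ((cmod a)^2 / p + (cmod b)^2 / q)"
  proof -
    define s where "s = cmod a"
    define t where "t = cmod b"
    have e: "(p + q) * (s^2 / p + t^2 / q) - (s + t)^2 = (q * s - p * t)^2 / (p * q)"
      using assms by (simp add: field_simps power2_eq_square)
    have "0 \<le> (q * s - p * t)^2 / (p * q)" using assms by simp
    thus ?thesis using e unfolding s_def t_def by linarith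
  qed
  finally show ?thesis .
qed



lemma dg_nonneg: "(\<And>k. w k \<ge> 0) \<Longrightarrow> dg w x \<ge> 0"
  unfolding dg_def by (rule sum_nonneg) auto

lemma Qbound:
  fixes w :: "'n::finite \<Rightarrow> real" and v :: "('n option \<Rightarrow> bool) \<Rightarrow> complex"
  assumes w0: "\<And>k. w k \<ge> 0" and c: "\<And>j. sum w UNIV + w j \<le> c"
  shows "(\<Sum>j\<in>UNIV. \<Sum>x\<in>UNIV. w j * (cmod (v x - v (sw j x)))^2) \<le> 2 * c * (\<Sum>x\<in>UNIV. (cmod (v x))^2)"
proof -
  define g where "g j x = (if x None \<noteq> x (Some j) then (cmod (v x))^2 / dg w x else 0)" for j x
  have c0: "c \<ge> 0" using c[of undefined] w0 by (smt (verit) sum_nonneg)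
  have g0: "g j x \<ge> 0" for j x using dg_nonneg[of w x, OF w0] by (simp add: g_def)
  have pt: "w j * (cmod (v x - v (sw j x)))^2 \<le> c * w j * (g j x + g j (sw j x))" for j x
  proof (cases "x None = x (Some j)")
    case True
    then show ?thesis using c0 w0[of j] g0[of j x] g0[of j "sw j x"] by (simp add: sw_id)
  next
    case False
    show ?thesis
    proof (cases "w j = 0")
      case True then show ?thesis by simp
    next
      case wF: False
      hence wp: "w j > 0" using w0[of j] by simp
      have cs: "sw j x None \<noteq> sw j x (Some j)" using False sw_cond by metis
      have p: "dg w x > 0" using dg_ge[where w=w, OF w0 False] wp by simp
      have q: "dg w (sw j x) > 0" using dg_ge[where w=w, OF w0 cs] wp by simp
      have gx: "g j x = (cmod (v x))^2 / dg w x" using False by (simp add: g_def)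
      have gy: "g j (sw j x) = (cmod (v (sw j x)))^2 / dg w (sw j x)" using cs by (simp add: g_def)
      have "(cmod (v x - v (sw j x)))^2 \<le> (dg w x + dg w (sw j x)) * (g j x + g j (sw j x))"
        unfolding gx gy by (rule key_ineq[OF p q])
      also have "\<dots> \<le> c * (g j x + g j (sw j x))"
        unfolding dg_sum[OF False] using c[of j] g0[of j x] g0[of j "sw j x"]
        by (intro mult_right_mono) auto
      finally have "(cmod (v x - v (sw j x)))^2 \<le> c * (g j x + g j (sw j x))" .
      hence "w j * (cmod (v x - v (sw j x)))^2 \<le> w j * (c * (g j x + g j (sw j x)))"
        using wp by (intro mult_left_mono) auto
      thus ?thesis by (simp add: mult_ac)
    qed
  qed
  have "(\<Sum>j\<in>UNIV. \<Sum>x\<in>UNIV. w j * (cmod (v x - v (sw j x)))^2) \<le>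
        (\<Sum>j\<in>UNIV. \<Sum>x\<in>UNIV. c * w j * (g j x + g j (sw j x)))"
    by (intro sum_mono pt)
  also have "\<dots> = (\<Sum>j\<in>UNIV. 2 * c * (\<Sum>x\<in>UNIV. w j * g j x))"
  proof (rule sum.cong[OF refl])
    fix j
    have "(\<Sum>x\<in>UNIV. g j (sw j x)) = (\<Sum>x\<in>UNIV. g j x)" by (rule sum_sw)
    thus "(\<Sum>x\<in>UNIV. c * w j * (g j x + g j (sw j x))) = 2 * c * (\<Sum>x\<in>UNIV. w j * g j x)"
      by (simp add: sum_distrib_left[symmetric] sum.distrib)
  qed
  also have "\<dots> = 2 * c * (\<Sum>x\<in>UNIV. \<Sum>j\<in>UNIV. w j * g j x)"
    by (simp only: sum_distrib_left[symmetric] sum.swap[of _ UNIV UNIV])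
  also have "\<dots> \<le> 2 * c * (\<Sum>x\<in>UNIV. (cmod (v x))^2)"
  proof (intro mult_left_mono sum_mono)
    fix x
    have "(\<Sum>j\<in>UNIV. w j * g j x) = dg w x * ((cmod (v x))^2 / dg w x)"
      unfolding dg_def g_def sum_distrib_right by (rule sum.cong) auto
    also have "\<dots> \<le> (cmod (v x))^2" by (cases "dg w x = 0") auto
    finally show "(\<Sum>j\<in>UNIV. w j * g j x) \<le> (cmod (v x))^2" .
  qed (use c0 in auto)
  finally show ?thesis .
qed



lemma sqrt_split:
  fixes a x y :: real
  assumes "a \<ge> 0"
  shows "a * x * y = (sqrt a * x) * (sqrt a * y)"
proof -
  have "(sqrt a * x) * (sqrt a * y) = (sqrt a * sqrt a) * (x * y)" by (simp only: mult_ac)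
  also have "\<dots> = a * (x * y)" using assms by simp
  finally show ?thesis by (simp only: mult_ac)
qed

theorem lemma1:
  fixes w :: "'n::finite \<Rightarrow> real"
  assumes "\<And>j. w j \<ge> 0"
  shows "op_norm (H_star w) \<le> Max (range w) + (\<Sum>j\<in>UNIV. w j)"
proof -
  define c where "c = Max (range w) + (\<Sum>j\<in>UNIV. w j)"
  have cj: "sum w UNIV + w j \<le> c" for j
    unfolding c_def using Max_ge[of "range w" "w j"] by auto
  have c0: "c \<ge> 0" using cj[of undefined] assms by (smt (verit) sum_nonneg)
  have main: "norm (H_star w *v v) \<le> c * norm v" for v
  proof -
    define u where "u = H_star w *v v"
    define du where "du j x = u$x - u$(sw j x)" for j x
    define dv where "dv j x = v$x - v$(sw j x)" for j x
    define S where "S = (\<Sum>j\<in>UNIV. \<Sum>x\<in>UNIV. w j * cmod (du j x) * cmod (dv j x))"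
    define Qu where "Qu = (\<Sum>j\<in>UNIV. \<Sum>x\<in>UNIV. w j * (cmod (du j x))^2)"
    define Qv where "Qv = (\<Sum>j\<in>UNIV. \<Sum>x\<in>UNIV. w j * (cmod (dv j x))^2)"
    have S0: "S \<ge> 0" unfolding S_def using assms by (intro sum_nonneg) auto
    have Qu0: "Qu \<ge> 0" unfolding Qu_def using assms by (intro sum_nonneg) auto
    have Qv0: "Qv \<ge> 0" unfolding Qv_def using assms by (intro sum_nonneg) auto
    have Qub: "Qu \<le> 2 * c * (norm u)^2"
      unfolding Qu_def du_def normsq using Qbound[of w c "\<lambda>x. u$x", OF assms cj] by simp
    have Qvb: "Qv \<le> 2 * c * (norm v)^2"
      unfolding Qv_def dv_def normsq using Qbound[of w c "\<lambda>x. v$x", OF assms cj] by simp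
    have CS: "S^2 \<le> Qu * Qv"
    proof -
      have "S = (\<Sum>j\<in>UNIV. \<Sum>x\<in>UNIV. (sqrt (w j) * cmod (du j x)) * (sqrt (w j) * cmod (dv j x)))"
        unfolding S_def
      proof (intro sum.cong refl)
        fix j x
        show "w j * cmod (du j x) * cmod (dv j x) = (sqrt (w j) * cmod (du j x)) * (sqrt (w j) * cmod (dv j x))"
          by (rule sqrt_split) (rule assms)
      qed
      moreover have "Qu = (\<Sum>j\<in>UNIV. \<Sum>x\<in>UNIV. (sqrt (w j) * cmod (du j x))^2)"
        unfolding Qu_def using assms by (intro sum.cong refl) (simp add: power_mult_distrib)
      moreover have "Qv = (\<Sum>j\<in>UNIV. \<Sum>x\<in>UNIV. (sqrt (w j) * cmod (dv j x))^2)"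
        unfolding Qv_def using assms by (intro sum.cong refl) (simp add: power_mult_distrib)
      ultimately show ?thesis
        using CS2[of "\<lambda>j x. sqrt (w j) * cmod (du j x)" "\<lambda>j x. sqrt (w j) * cmod (dv j x)" UNIV UNIV]
        by (simp only:)
    qed
    have NS: "(norm u)^2 \<le> S / 2"
    proof -
      have e1: "(\<Sum>x\<in>UNIV. cnj (u$x) * u$x) = (\<Sum>x\<in>UNIV. \<Sum>j\<in>UNIV. cnj (u$x) * (of_real (w j) * dv j x))"
        unfolding u_def dv_def Hv by (simp add: sum_distrib_left)
      also have "\<dots> = (\<Sum>j\<in>UNIV. of_real (w j) * (\<Sum>x\<in>UNIV. cnj (u$x) * dv j x))"
        by (subst sum.swap) (rule sum.cong[OF refl], simp add: sum_distrib_left mult_ac)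
      also have "\<dots> = (\<Sum>j\<in>UNIV. \<Sum>x\<in>UNIV. of_real (w j / 2) * (cnj (du j x) * dv j x))"
        unfolding dv_def du_def half[of "\<lambda>x. u$x" "\<lambda>x. v$x"] by (rule sum.cong[OF refl]) (simp add: sum_distrib_left mult_ac)
      finally have e: "(\<Sum>x\<in>UNIV. cnj (u$x) * u$x) = \<dots>" .
      have "(norm u)^2 = Re (\<Sum>x\<in>UNIV. cnj (u$x) * u$x)"
        unfolding normsq Re_sum by (intro sum.cong refl) (metis Re_complex_of_real complex_norm_square mult.commute)
      also have "\<dots> = (\<Sum>j\<in>UNIV. \<Sum>x\<in>UNIV. Re (of_real (w j / 2) * (cnj (du j x) * dv j x)))"
        unfolding e Re_sum ..
      also have "\<dots> \<le> (\<Sum>j\<in>UNIV. \<Sum>x\<in>UNIV. (w j / 2) * (cmod (du j x) * cmod (dv j x)))"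
      proof (intro sum_mono)
        fix j x
        have "Re (of_real (w j / 2) * (cnj (du j x) * dv j x)) \<le> cmod (of_real (w j / 2) * (cnj (du j x) * dv j x))"
          by (rule complex_Re_le_cmod)
        also have "\<dots> = (w j / 2) * (cmod (du j x) * cmod (dv j x))"
          using assms[of j] by (simp add: norm_mult)
        finally show "Re (of_real (w j / 2) * (cnj (du j x) * dv j x)) \<le> (w j / 2) * (cmod (du j x) * cmod (dv j x))" .
      qed
      also have "\<dots> = S / 2"
        unfolding S_def sum_divide_distrib by (intro sum.cong refl) (simp add: mult_ac)
      finally show ?thesis .
    qed
    define N where "N = norm u"
    define M where "M = norm v"
    have N0: "N \<ge> 0" "M \<ge> 0" unfolding N_def M_def by auto
    have "Qu * Qv \<le> (2 * c * N^2) * (2 * c * M^2)"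
      using Qub Qvb Qv0 c0 unfolding N_def M_def by (intro mult_mono) auto
    hence A: "S^2 \<le> (2 * c * N^2) * (2 * c * M^2)" using CS by linarith
    have B: "(N^2)^2 \<le> (S/2)^2"
      using NS unfolding N_def by (intro power_mono) auto
    have e1: "(S/2)^2 = S^2 / 4" by (simp add: power_divide)
    have e2: "(2 * c * N^2) * (2 * c * M^2) / 4 = (c * N * M)^2" by (simp add: power2_eq_square)
    have "(N^2)^2 \<le> (c * N * M)^2"
      using A B e1 e2 by linarith
    hence "N^2 \<le> c * N * M"
      by (rule power2_le_imp_le) (use N0 c0 in simp)
    hence "N \<le> c * M"
    proof (cases "N = 0")
      case True then show ?thesis using N0 c0 by simp
    next
      case False
      assume "N^2 \<le> c * N * M"
      hence "N * N \<le> N * (c * M)" by (simp add: power2_eq_square mult_ac)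
      thus ?thesis using False N0 by (simp add: mult_le_cancel_left)
    qed
    thus ?thesis unfolding N_def M_def u_def .
  qed
  show ?thesis
    unfolding op_norm_def c_def[symmetric] by (rule onorm_le) (rule main)
qed

end
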